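(* Let $H=(V,E)$ be an unweighted hypergraph on $n$ vertices, and consider the algorithm Estimation$(H)$: compute a number $k>0$ with $\gamma_H(e)\ge k$ for all $e\in E$; set $H_0=H$ and $i=1$; while $H_{i-1}$ has edges, let $F_i=\textsc{WeakEdges}(H_{i-1},2^ik)$, set $\gamma'(e)=2^{i-1}k$ for every $e\in F_i$, set $H_i=H_{i-1}-F_i$ and increase $i$ by one. Here $\textsc{WeakEdges}(G,t)$ returns a set of edges of $G$ containing all $t$-weak edges of $G$. Let $c>0$. If $\textsc{WeakEdges}(G,t)$ outputs a $ct$-light set of edges of $G$ for every input $G,t$, then the output $\gamma'$ of Estimation$(H)$ satisfies $\sum_{e\in E}\frac{1}{\gamma'(e)}\le 2c(n-1)$.
   Context: A hypergraph $H=(V,E)$ has edges that are subsets of $V$. For $U\subseteq V$, $H[U]=(U,\{e\in E:e\subseteq U\})$; for $A\subseteq V$, $\delta_H(A)$ is the set of edges meeting both $A$ and $V\setminus A$; $\lambda(H)=\min_{\emptyset\subsetneq A\subsetneq V}|\delta_H(A)|$. The strength of $e$ is $\gamma_H(e)=\max_{e\subseteq U\subseteq V}\lambda(H[U])$; an edge is $t$-weak in $G$ if its strength in $G$ is less than $t$. $\kappa(G)$ is the number of connected components of $G$. A set $E'\subseteq E(G)$ is $\ell$-light if $|E'|\le\ell(\kappa(G-E')-\kappa(G))$. *)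

theory Defs
  imports Complex_Main
begin

definition induced_edges :: "'a set set \<Rightarrow> 'a set \<Rightarrow> 'a set set" where
  "induced_edges E U = {e \<in> E. e \<subseteq> U}"

definition cut_edges :: "'a set \<Rightarrow> 'a set set \<Rightarrow> 'a set \<Rightarrow> 'a set set" where
  "cut_edges V E A = {e \<in> E. e \<inter> A \<noteq> {} \<and> e \<inter> (V - A) \<noteq> {}}"

text \<open>lambda(H) = min over nonempty proper subsets A of |delta_H(A)|
  (only meaningful when V has at least two vertices).\<close>
definition edge_conn :: "'a set \<Rightarrow> 'a set set \<Rightarrow> nat" where
  "edge_conn V E = Min {card (cut_edges V E A) | A. A \<noteq> {} \<and> A \<subset> V}"

definition strength :: "'a set \<Rightarrow> 'a set set \<Rightarrow> 'a set \<Rightarrow> nat" where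
  "strength V E e = Max {edge_conn U (induced_edges E U) | U. e \<subseteq> U \<and> U \<subseteq> V}"

definition weak :: "'a set \<Rightarrow> 'a set set \<Rightarrow> real \<Rightarrow> 'a set \<Rightarrow> bool" where
  "weak V E t e \<longleftrightarrow> real (strength V E e) < t"

definition conn_rel :: "'a set \<Rightarrow> 'a set set \<Rightarrow> ('a \<times> 'a) set" where
  "conn_rel V E = ({(u, v). u \<in> V \<and> v \<in> V \<and> (\<exists>e\<in>E. u \<in> e \<and> v \<in> e)})\<^sup>*"

definition num_components :: "'a set \<Rightarrow> 'a set set \<Rightarrow> nat" where
  "num_components V E = card (V // conn_rel V E)"

definition light :: "real \<Rightarrow> 'a set \<Rightarrow> 'a set set \<Rightarrow> 'a set set \<Rightarrow> bool" where
  "light l V E F \<longleftrightarrow>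
     real (card F) \<le> l * (real (num_components V (E - F)) - real (num_components V E))"

text \<open>The algorithm Estimation(H), with the subroutine WeakEdges given as a function
  W V E t (returning a set of edges of the hypergraph (V,E)).
  est_H i is H_i; est_F i is F_i (for i \<ge> 1).\<close>
primrec est_H :: "('a set \<Rightarrow> 'a set set \<Rightarrow> real \<Rightarrow> 'a set set) \<Rightarrow> 'a set \<Rightarrow> 'a set set
                   \<Rightarrow> real \<Rightarrow> nat \<Rightarrow> 'a set set" where
  "est_H W V E k 0 = E"
| "est_H W V E k (Suc i) =
     est_H W V E k i - W V (est_H W V E k i) (2 ^ Suc i * k)"

definition est_F :: "('a set \<Rightarrow> 'a set set \<Rightarrow> real \<Rightarrow> 'a set set) \<Rightarrow> 'a set \<Rightarrow> 'a set set
                   \<Rightarrow> real \<Rightarrow> nat \<Rightarrow> 'a set set" where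
  "est_F W V E k i = W V (est_H W V E k (i - 1)) (2 ^ i * k)"

definition est_gamma :: "('a set \<Rightarrow> 'a set set \<Rightarrow> real \<Rightarrow> 'a set set) \<Rightarrow> 'a set \<Rightarrow> 'a set set
                   \<Rightarrow> real \<Rightarrow> 'a set \<Rightarrow> real" where
  "est_gamma W V E k e =
     (let i = (LEAST i. 1 \<le> i \<and> e \<in> est_F W V E k i) in 2 ^ (i - 1) * k)"

end

theory Submission
  imports Defs
begin

lemma H_sub: "est_H W V E k m \<subseteq> E"
  by (induction m) auto

lemma H_anti: "j \<le> m \<Longrightarrow> est_H W V E k m \<subseteq> est_H W V E k j"
  by (induction m) (auto simp: le_Suc_eq)

lemma F_disj: "1 \<le> j \<Longrightarrow> est_F W V E k j \<inter> est_H W V E k j = {}"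
proof -
  assume "1 \<le> j"
  then obtain i where j: "j = Suc i" by (cases j) auto
  show ?thesis unfolding j est_F_def by auto
qed

lemma gamma_val:
  assumes "e \<in> W V (est_H W V E k m) (2 ^ Suc m * k)" "e \<in> est_H W V E k m"
  shows "est_gamma W V E k e = 2 ^ m * k"
proof -
  have "(LEAST i. 1 \<le> i \<and> e \<in> est_F W V E k i) = Suc m"
  proof (rule Least_equality)
    show "1 \<le> Suc m \<and> e \<in> est_F W V E k (Suc m)" using assms(1) by (simp add: est_F_def)
  next
    fix y assume y: "1 \<le> y \<and> e \<in> est_F W V E k y"
    show "Suc m \<le> y"
    proof (rule ccontr)
      assume "\<not> Suc m \<le> y"
      then have "y \<le> m" by simp
      then have "e \<in> est_H W V E k y" using H_anti assms(2) by blast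
      then show False using F_disj[of y W V E k] y by blast
    qed
  qed
  then show ?thesis unfolding est_gamma_def by simp
qed

lemma strength_le:
  assumes finV: "finite V" and E'fin: "finite E'" and e: "e \<in> E'" "e \<subseteq> V" "2 \<le> card e"
  shows "strength V E' e \<le> card E'"
proof -
  let ?S = "{edge_conn U (induced_edges E' U) | U. e \<subseteq> U \<and> U \<subseteq> V}"
  have finS: "finite ?S"
  proof -
    have "?S \<subseteq> (\<lambda>U. edge_conn U (induced_edges E' U)) ` Pow V" by auto
    then show ?thesis by (rule finite_subset) (simp add: finV)
  qed
  have neS: "?S \<noteq> {}" using e by blast
  have "\<forall>s\<in>?S. s \<le> card E'"
  proof
    fix s assume "s \<in> ?S"
    then obtain U where U: "e \<subseteq> U" "U \<subseteq> V" and s: "s = edge_conn U (induced_edges E' U)" by blast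
    obtain x where x: "x \<in> e" using e by fastforce
    have "\<not> e \<subseteq> {x}"
    proof
      assume "e \<subseteq> {x}"
      then have "card e \<le> card {x}" by (intro card_mono) auto
      then show False using e by simp
    qed
    then obtain y where y: "y \<in> e" "y \<noteq> x" by blast
    let ?T = "{card (cut_edges U (induced_edges E' U) A) | A. A \<noteq> {} \<and> A \<subset> U}"
    have finU: "finite U" using U(2) finV by (rule finite_subset)
    have finT: "finite ?T"
    proof -
      have "?T \<subseteq> (\<lambda>A. card (cut_edges U (induced_edges E' U) A)) ` Pow U" by auto
      then show ?thesis by (rule finite_subset) (simp add: finU)
    qed
    have inT: "card (cut_edges U (induced_edges E' U) {x}) \<in> ?T"
      using x y U by blast
    have "edge_conn U (induced_edges E' U) \<le> card (cut_edges U (induced_edges E' U) {x})"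
      unfolding edge_conn_def using Min_le[OF finT inT] .
    also have "\<dots> \<le> card E'"
      by (rule card_mono[OF E'fin]) (auto simp: cut_edges_def induced_edges_def)
    finally show "s \<le> card E'" using s by simp
  qed
  then show ?thesis unfolding strength_def using Max_le_iff[OF finS neS] by blast
qed

lemma nc_le: "finite V \<Longrightarrow> num_components V E' \<le> card V"
proof -
  assume "finite V"
  have "V // conn_rel V E' = (\<lambda>x. conn_rel V E' `` {x}) ` V" by (auto simp: quotient_def)
  then show ?thesis unfolding num_components_def using card_image_le \<open>finite V\<close> by metis
qed

lemma nc_ge: "finite V \<Longrightarrow> V \<noteq> {} \<Longrightarrow> 1 \<le> num_components V E'"
proof -
  assume "finite V" "V \<noteq> {}"
  have q: "V // conn_rel V E' = (\<lambda>x. conn_rel V E' `` {x}) ` V" by (auto simp: quotient_def)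
  then have "finite (V // conn_rel V E')" "V // conn_rel V E' \<noteq> {}" using \<open>finite V\<close> \<open>V \<noteq> {}\<close> by auto
  then show ?thesis unfolding num_components_def by (simp add: Suc_le_eq card_gt_0_iff)
qed

lemma div_aux: "(0::real) < q \<Longrightarrow> x \<le> c * (2 * q) * d \<Longrightarrow> x / q \<le> 2 * c * d"
  by (simp add: pos_divide_le_eq mult_ac)

theorem lemma3p2:
  fixes V :: "'a set" and E :: "'a set set"
    and W :: "'a set \<Rightarrow> 'a set set \<Rightarrow> real \<Rightarrow> 'a set set"
    and k c :: real
  assumes finV: "finite V"
    and edges: "\<forall>e\<in>E. e \<subseteq> V \<and> 2 \<le> card e"
    and kpos: "0 < k"
    and kbound: "\<forall>e\<in>E. k \<le> real (strength V E e)"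
    and cpos: "0 < c"
    and W_sub: "\<forall>E' t. E' \<subseteq> E \<and> 0 < t \<longrightarrow> W V E' t \<subseteq> E'"
    and W_weak: "\<forall>E' t. E' \<subseteq> E \<and> 0 < t \<longrightarrow> (\<forall>e\<in>E'. weak V E' t e \<longrightarrow> e \<in> W V E' t)"
    and W_light: "\<forall>E' t. E' \<subseteq> E \<and> 0 < t \<longrightarrow> light (c * t) V E' (W V E' t)"
  shows "(\<Sum>e\<in>E. 1 / est_gamma W V E k e) \<le> 2 * c * real (card V - 1)"
proof -
  let ?H = "est_H W V E k"
  let ?g = "est_gamma W V E k"
  let ?nc = "\<lambda>m. real (num_components V (?H m))"
  have finE: "finite E"
  proof -
    have "E \<subseteq> Pow V" using edges by auto
    then show ?thesis by (rule finite_subset) (simp add: finV)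
  qed
  have main: "(\<Sum>e\<in>E - ?H m. 1 / ?g e) \<le> 2 * c * (?nc m - ?nc 0)" for m
  proof (induction m)
    case 0
    then show ?case by simp
  next
    case (Suc m)
    define t where "t = (2::real) ^ Suc m * k"
    define F where "F = W V (?H m) t"
    have tpos: "0 < t" unfolding t_def using kpos by simp
    have HmE: "?H m \<subseteq> E" by (rule H_sub)
    have FH: "F \<subseteq> ?H m" unfolding F_def using W_sub HmE tpos by blast
    have HS: "?H (Suc m) = ?H m - F" by (simp add: F_def t_def)
    have dec: "E - ?H (Suc m) = (E - ?H m) \<union> F" using HS FH HmE by blast
    have disj: "(E - ?H m) \<inter> F = {}" using FH by blast
    have finF: "finite F" using finE by (rule finite_subset[rotated]) (use FH HmE in blast)
    have sF: "(\<Sum>e\<in>F. 1 / ?g e) = real (card F) / (2 ^ m * k)"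
    proof -
      have "(\<Sum>e\<in>F. 1 / ?g e) = (\<Sum>e\<in>F. 1 / (2 ^ m * k))"
        by (rule sum.cong) (use FH in \<open>auto simp: gamma_val F_def t_def\<close>)
      then show ?thesis by simp
    qed
    have lt: "real (card F) \<le> c * t * (?nc (Suc m) - ?nc m)"
      using W_light HmE tpos HS unfolding light_def F_def by auto
    have p: "0 < (2::real) ^ m * k" using kpos by simp
    have "real (card F) / (2 ^ m * k) \<le> 2 * c * (?nc (Suc m) - ?nc m)"
      using div_aux[OF p, of "real (card F)" c "?nc (Suc m) - ?nc m"] lt unfolding t_def by simp
    then have "(\<Sum>e\<in>F. 1 / ?g e) \<le> 2 * c * (?nc (Suc m) - ?nc m)" using sF by simp
    moreover have "(\<Sum>e\<in>E - ?H (Suc m). 1 / ?g e)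
        = (\<Sum>e\<in>E - ?H m. 1 / ?g e) + (\<Sum>e\<in>F. 1 / ?g e)"
      unfolding dec by (rule sum.union_disjoint) (use finE finF disj in auto)
    ultimately show ?case using Suc.IH by (simp add: algebra_simps)
  qed
  obtain N where N: "real (card E) / k < 2 ^ N" using real_arch_pow[of 2 "real (card E) / k"] by auto
  have tN: "real (card E) < 2 ^ Suc N * k"
  proof -
    have "real (card E) < 2 ^ N * k" using N kpos by (simp add: pos_divide_less_eq)
    also have "\<dots> \<le> 2 ^ Suc N * k" using kpos by simp
    finally show ?thesis .
  qed
  have Hempty: "?H (Suc N) = {}"
  proof -
    have HNE: "?H N \<subseteq> E" by (rule H_sub)
    have "e \<in> W V (?H N) (2 ^ Suc N * k)" if e: "e \<in> ?H N" for e
    proof -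
      have "finite (?H N)" using HNE finE by (rule finite_subset)
      then have "strength V (?H N) e \<le> card (?H N)"
        using strength_le[OF finV _ e] edges HNE e by blast
      also have "\<dots> \<le> card E" using card_mono[OF finE HNE] .
      finally have "weak V (?H N) (2 ^ Suc N * k) e" unfolding weak_def using tN by linarith
      then show ?thesis using W_weak HNE e kpos by simp
    qed
    then show ?thesis by auto
  qed
  show ?thesis
  proof (cases "V = {}")
    case True
    then have "E = {}" using edges by fastforce
    then show ?thesis using cpos by simp
  next
    case False
    have a: "?nc (Suc N) \<le> real (card V)" using nc_le[OF finV] by simp
    have b: "1 \<le> ?nc 0" using nc_ge[OF finV False] by simp
    have cv: "real (card V - 1) = real (card V) - 1" using False finV
      by (simp add: card_gt_0_iff Suc_le_eq of_nat_diff)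
    have "(\<Sum>e\<in>E. 1 / ?g e) \<le> 2 * c * (?nc (Suc N) - ?nc 0)"
      using main[of "Suc N"] unfolding Hempty Diff_empty est_H.simps(1) .
    also have "\<dots> \<le> 2 * c * (real (card V) - 1)"
      using a b cpos by (intro mult_left_mono) auto
    finally show ?thesis using cv by simp
  qed
qed

end
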